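(* Let $\mathcal{A}$ be a finite set of $m$ alternatives and $\mathcal{R}=(R_1,\dots,R_n)$ a sequence of reflexive binary relations on $\mathcal{A}$. Construct the weighted directed graph $G$ whose nodes are a source $s$, a sink $t$, one node for each alternative $a\in\mathcal{A}$, and one node $v_{(a,b)}$ for each ordered pair $(a,b)$ of distinct alternatives, with the following arcs: for each ordered pair $(a,b)$ of distinct alternatives, an arc $s\to v_{(a,b)}$ of weight $N(a,b)$, an arc $v_{(a,b)}\to t$ of weight $N(b,a)$, and arcs $a\to v_{(a,b)}$ and $v_{(a,b)}\to a$ each of weight $L$, where $L>(mn)^5$; and for each unordered pair $\{a,b\}$ of distinct alternatives, arcs $a\to b$ and $b\to a$ each of weight $E(a,b)=E(b,a)$. An $s$-$t$ cut is a partition $(A,B)$ of the node set with $s\in A$, $t\in B$; its capacity is the total weight of arcs from $A$ to $B$; a minimum cut is one of minimum capacity. Then: (1) If $(A,B)$ is a minimum cut, then the dichotomous weak order given by the ordered partition $(A\cap\mathcal{A},\,B\cap\mathcal{A})$ of the alternatives has cost equal to $\mathrm{MP}(\mathcal{R},2\text{-}\mathrm{WO})$. (2) If the dichotomous weak order given by $(A',B')$ has cost equal to $\mathrm{MP}(\mathcal{R},2\text{-}\mathrm{WO})$, then $(A,B)$ is a minimum cut, where $A$ consists of $s$, the nodes of the alternatives in $A'$, and the nodes $v_{(x,y)}$ with $x\in A'$, and $B$ consists of all remaining nodes.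
   Context: For alternatives $a,b\in\mathcal{A}$, let $N(a,b)$ be the number of indices $i$ with $(a,b)\in R_i$ and $(b,a)\notin R_i$, and $E(a,b)$ the number of indices $i$ with $(a,b)\in R_i$ and $(b,a)\in R_i$. A dichotomous weak order on $\mathcal{A}$ is given by an ordered partition $(A_1,A_2)$ of $\mathcal{A}$ (disjoint, union $\mathcal{A}$): every alternative of $A_1$ is strictly preferred to every alternative of $A_2$ and alternatives in the same part are tied. Its cost is $$\sum_{a\in A_1,\ b\in A_2}\big(2N(b,a)+E(b,a)\big)+\sum_{\{a,b\}:\ a\neq b,\ a,b\text{ in the same part}}\big(N(a,b)+N(b,a)\big),$$ the second sum over unordered pairs of distinct alternatives; $\mathrm{MP}(\mathcal{R},2\text{-}\mathrm{WO})$ denotes the minimum cost over all dichotomous weak orders on $\mathcal{A}$. *)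

theory Defs
  imports Complex_Main
begin

text \<open>Profile: a list Rs of binary relations; n = length Rs.\<close>

definition Ncnt :: "('a \<times> 'a) set list \<Rightarrow> 'a \<Rightarrow> 'a \<Rightarrow> nat" where
  "Ncnt Rs a b = card {i. i < length Rs \<and> (a, b) \<in> Rs ! i \<and> (b, a) \<notin> Rs ! i}"

definition Ecnt :: "('a \<times> 'a) set list \<Rightarrow> 'a \<Rightarrow> 'a \<Rightarrow> nat" where
  "Ecnt Rs a b = card {i. i < length Rs \<and> (a, b) \<in> Rs ! i \<and> (b, a) \<in> Rs ! i}"

text \<open>Cost of the dichotomous weak order with top part A1 and bottom part Alts - A1.
  The sum over unordered pairs {a,b} of N(a,b)+N(b,a) is written as the sum over
  ordered pairs (a,b), a \<noteq> b, of N(a,b).\<close>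
definition dwo_cost :: "('a \<times> 'a) set list \<Rightarrow> 'a set \<Rightarrow> 'a set \<Rightarrow> nat" where
  "dwo_cost Rs Alts A1 =
     (\<Sum>(a, b) \<in> A1 \<times> (Alts - A1). 2 * Ncnt Rs b a + Ecnt Rs b a)
   + (\<Sum>(a, b) \<in> {(a, b). a \<noteq> b \<and> ((a \<in> A1 \<and> b \<in> A1) \<or> (a \<in> Alts - A1 \<and> b \<in> Alts - A1))}.
        Ncnt Rs a b)"

definition MP_2WO :: "('a \<times> 'a) set list \<Rightarrow> 'a set \<Rightarrow> nat" where
  "MP_2WO Rs Alts = Min (dwo_cost Rs Alts ` Pow Alts)"

datatype 'a node = Src | Snk | Alt 'a | PairN 'a 'a

definition nodes :: "'a set \<Rightarrow> 'a node set" where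
  "nodes Alts = {Src, Snk} \<union> Alt ` Alts \<union> {PairN a b | a b. a \<in> Alts \<and> b \<in> Alts \<and> a \<noteq> b}"

text \<open>Arc weights (0 = no arc).\<close>
fun wt :: "('a \<times> 'a) set list \<Rightarrow> 'a set \<Rightarrow> real \<Rightarrow> 'a node \<Rightarrow> 'a node \<Rightarrow> real" where
  "wt Rs Alts L Src (PairN a b) = (if a \<in> Alts \<and> b \<in> Alts \<and> a \<noteq> b then real (Ncnt Rs a b) else 0)"
| "wt Rs Alts L (PairN a b) Snk = (if a \<in> Alts \<and> b \<in> Alts \<and> a \<noteq> b then real (Ncnt Rs b a) else 0)"
| "wt Rs Alts L (Alt x) (PairN a b) = (if a \<in> Alts \<and> b \<in> Alts \<and> a \<noteq> b \<and> x = a then L else 0)"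
| "wt Rs Alts L (PairN a b) (Alt x) = (if a \<in> Alts \<and> b \<in> Alts \<and> a \<noteq> b \<and> x = a then L else 0)"
| "wt Rs Alts L (Alt a) (Alt b) = (if a \<in> Alts \<and> b \<in> Alts \<and> a \<noteq> b then real (Ecnt Rs a b) else 0)"
| "wt Rs Alts L _ _ = 0"

text \<open>An s-t cut (S, nodes - S) is represented by its source side S.\<close>
definition is_cut :: "'a set \<Rightarrow> 'a node set \<Rightarrow> bool" where
  "is_cut Alts S \<longleftrightarrow> S \<subseteq> nodes Alts \<and> Src \<in> S \<and> Snk \<notin> S"

definition cut_cap :: "('a \<times> 'a) set list \<Rightarrow> 'a set \<Rightarrow> real \<Rightarrow> 'a node set \<Rightarrow> real" where
  "cut_cap Rs Alts L S = (\<Sum>(u, v) \<in> S \<times> (nodes Alts - S). wt Rs Alts L u v)"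

definition is_min_cut :: "('a \<times> 'a) set list \<Rightarrow> 'a set \<Rightarrow> real \<Rightarrow> 'a node set \<Rightarrow> bool" where
  "is_min_cut Rs Alts L S \<longleftrightarrow> is_cut Alts S \<and>
     (\<forall>S'. is_cut Alts S' \<longrightarrow> cut_cap Rs Alts L S \<le> cut_cap Rs Alts L S')"

end

theory Submission
  imports Defs
begin

definition PS :: "'a set \<Rightarrow> 'a set \<Rightarrow> 'a node set" where
  "PS Alts X = {PairN x y | x y. x \<in> X \<and> y \<in> Alts \<and> x \<noteq> y}"
definition QS :: "'a set \<Rightarrow> 'a set \<Rightarrow> ('a \<times> 'a) set" where
  "QS Alts X = {(x,y). x \<in> X \<and> y \<in> Alts \<and> x \<noteq> y}"
definition cutOf :: "'a set \<Rightarrow> 'a set \<Rightarrow> 'a node set" where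
  "cutOf Alts A = {Src} \<union> Alt ` A \<union> PS Alts A"

lemma PS_img: "PS Alts X = (\<lambda>(x,y). PairN x y) ` QS Alts X"
  unfolding PS_def QS_def by auto

lemma QS_fin: "finite Alts \<Longrightarrow> X \<subseteq> Alts \<Longrightarrow> finite (QS Alts X)"
  unfolding QS_def by (rule finite_subset[of _ "Alts \<times> Alts"]) auto

lemma sum_PS: "finite Alts \<Longrightarrow> X \<subseteq> Alts \<Longrightarrow>
   (\<Sum>v\<in>PS Alts X. g v) = (\<Sum>(x,y)\<in>QS Alts X. g (PairN x y))"
  unfolding PS_img by (subst sum.reindex) (auto simp: inj_on_def intro!: sum.cong)

lemma sum_split: "finite Alts \<Longrightarrow> X \<subseteq> Alts \<Longrightarrow>
   (\<Sum>v\<in>Alt ` X \<union> PS Alts X. g v) = (\<Sum>b\<in>X. g (Alt b)) + (\<Sum>(x,y)\<in>QS Alts X. g (PairN x y))"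
proof -
  assume f: "finite Alts" and X: "X \<subseteq> Alts"
  have fX: "finite X" using f X finite_subset by blast
  have fP: "finite (PS Alts X)" unfolding PS_img using QS_fin[OF f X] by blast
  have d: "Alt ` X \<inter> PS Alts X = {}" unfolding PS_def by auto
  have "(\<Sum>v\<in>Alt ` X \<union> PS Alts X. g v) = (\<Sum>v\<in>Alt ` X. g v) + (\<Sum>v\<in>PS Alts X. g v)"
    using fX fP d by (simp add: sum.union_disjoint)
  also have "(\<Sum>v\<in>Alt ` X. g v) = (\<Sum>b\<in>X. g (Alt b))" by (simp add: sum.reindex inj_on_def)
  also have "(\<Sum>v\<in>PS Alts X. g v) = (\<Sum>(x,y)\<in>QS Alts X. g (PairN x y))" using sum_PS[OF f X] .
  finally show ?thesis .
qed

lemma nodes_fin: "finite Alts \<Longrightarrow> finite (nodes Alts)"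
proof -
  assume f: "finite Alts"
  have "{PairN a b | a b. a \<in> Alts \<and> b \<in> Alts \<and> a \<noteq> b} = PS Alts Alts" by (simp add: PS_def)
  then show ?thesis using f unfolding nodes_def PS_img by (auto intro: QS_fin)
qed

lemma wt_nonneg: "L \<ge> 0 \<Longrightarrow> wt Rs Alts L u v \<ge> 0"
  by (cases u; cases v) auto

lemma cutOf_compl: "A \<subseteq> Alts \<Longrightarrow> nodes Alts - cutOf Alts A = {Snk} \<union> Alt ` (Alts - A) \<union> PS Alts (Alts - A)"
  unfolding nodes_def cutOf_def PS_def by auto

lemma swap_sum: "(\<Sum>(x,y)\<in>X\<times>X. f x y) = (\<Sum>(x,y)\<in>X\<times>X. f y x)"
  by (rule sum.reindex_bij_witness[of _ prod.swap prod.swap]) auto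

lemma Ecnt_sym: "Ecnt Rs a b = Ecnt Rs b a"
  unfolding Ecnt_def by (rule arg_cong[where f=card]) auto

lemma filt: "finite Alts \<Longrightarrow> {p \<in> Alts \<times> Alts. P p} = X \<Longrightarrow>
   (\<Sum>p\<in>X. f p) = (\<Sum>p\<in>Alts \<times> Alts. if P p then f p else 0)"
proof -
  assume f: "finite Alts" and e: "{p \<in> Alts \<times> Alts. P p} = X"
  have "(\<Sum>p\<in>X. f p) = (\<Sum>p\<in>{p \<in> Alts \<times> Alts. P p}. f p)" using e by simp
  also have "\<dots> = (\<Sum>p\<in>Alts \<times> Alts. if P p then f p else 0)"
    by (rule sum.inter_filter) (simp add: f)
  finally show ?thesis .
qed

lemma cap_cutOf:
  assumes f: "finite Alts" and A: "A \<subseteq> Alts"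
  shows "cut_cap Rs Alts L (cutOf Alts A) = real (dwo_cost Rs Alts A)"
proof -
  define B where "B = Alts - A"
  have B: "B \<subseteq> Alts" unfolding B_def by blast
  have fA: "finite A" using f A finite_subset by blast
  have fB: "finite B" using f B finite_subset by blast
  define w where "w = wt Rs Alts L"
  define h where "h u = (\<Sum>v\<in>nodes Alts - cutOf Alts A. w u v)" for u
  have T: "nodes Alts - cutOf Alts A = insert Snk (Alt ` B \<union> PS Alts B)"
    using cutOf_compl[OF A] B_def by auto
  have S: "cutOf Alts A = insert Src (Alt ` A \<union> PS Alts A)" unfolding cutOf_def by auto
  have finP: "finite (PS Alts X)" if "X \<subseteq> Alts" for X
    unfolding PS_img using QS_fin[OF f that] by blast
  have hh: "h u = w u Snk + (\<Sum>b\<in>B. w u (Alt b)) + (\<Sum>(x,y)\<in>QS Alts B. w u (PairN x y))" for u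
  proof -
    have "Snk \<notin> Alt ` B \<union> PS Alts B" unfolding PS_def by auto
    then have "h u = w u Snk + (\<Sum>v\<in>Alt ` B \<union> PS Alts B. w u v)"
      unfolding h_def T using fB finP[OF B] by simp
    then show ?thesis using sum_split[OF f B] by simp
  qed
  have "cut_cap Rs Alts L (cutOf Alts A) = (\<Sum>u\<in>cutOf Alts A. h u)"
    unfolding cut_cap_def h_def w_def by (simp add: sum.cartesian_product)
  also have "\<dots> = h Src + (\<Sum>a\<in>A. h (Alt a)) + (\<Sum>(x,y)\<in>QS Alts A. h (PairN x y))"
  proof -
    have "Src \<notin> Alt ` A \<union> PS Alts A" unfolding PS_def by auto
    then have "(\<Sum>u\<in>cutOf Alts A. h u) = h Src + (\<Sum>v\<in>Alt ` A \<union> PS Alts A. h v)"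
      unfolding S using fA finP[OF A] by simp
    then show ?thesis using sum_split[OF f A] by simp
  qed
  also have "h Src = (\<Sum>(x,y)\<in>QS Alts B. real (Ncnt Rs x y))"
    unfolding hh w_def by (auto simp: QS_def B_def intro!: sum.cong)
  also have "(\<Sum>a\<in>A. h (Alt a)) = (\<Sum>a\<in>A. \<Sum>b\<in>B. real (Ecnt Rs a b))"
  proof (rule sum.cong)
    fix a assume a: "a \<in> A"
    have "(\<Sum>(x,y)\<in>QS Alts B. w (Alt a) (PairN x y)) = 0"
      using a by (intro sum.neutral) (auto simp: QS_def w_def B_def)
    then show "h (Alt a) = (\<Sum>b\<in>B. real (Ecnt Rs a b))"
      unfolding hh using a A B_def by (auto simp: w_def intro!: sum.cong)
  qed simp
  also have "(\<Sum>(x,y)\<in>QS Alts A. h (PairN x y)) = (\<Sum>(x,y)\<in>QS Alts A. real (Ncnt Rs y x))"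
  proof (rule sum.cong)
    fix p assume p: "p \<in> QS Alts A"
    obtain x y where xy: "p = (x,y)" by fastforce
    have "(\<Sum>b\<in>B. w (PairN x y) (Alt b)) = 0"
      using p xy by (intro sum.neutral) (auto simp: QS_def w_def B_def)
    moreover have "(\<Sum>(u,v)\<in>QS Alts B. w (PairN x y) (PairN u v)) = 0"
      by (intro sum.neutral) (auto simp: w_def)
    ultimately show "(case p of (x,y) \<Rightarrow> h (PairN x y)) = (case p of (x,y) \<Rightarrow> real (Ncnt Rs y x))"
      unfolding hh xy using p xy A by (auto simp: w_def QS_def)
  qed simp
  finally have cap: "cut_cap Rs Alts L (cutOf Alts A) = (\<Sum>(x,y)\<in>QS Alts B. real (Ncnt Rs x y))
     + (\<Sum>a\<in>A. \<Sum>b\<in>B. real (Ecnt Rs a b)) + (\<Sum>(x,y)\<in>QS Alts A. real (Ncnt Rs y x))" .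
  define D where "D = Alts \<times> Alts"
  define n where "n a b = real (Ncnt Rs a b)" for a b
  define e where "e a b = real (Ecnt Rs a b)" for a b
  have 1: "(\<Sum>(x,y)\<in>QS Alts B. real (Ncnt Rs x y)) = (\<Sum>(x,y)\<in>D. if x \<notin> A \<and> x \<noteq> y then n x y else 0)"
    unfolding D_def n_def by (subst filt[OF f, where P="\<lambda>(x,y). x \<notin> A \<and> x \<noteq> y"]) (auto simp: QS_def B_def intro!: sum.cong)
  have 2: "(\<Sum>a\<in>A. \<Sum>b\<in>B. real (Ecnt Rs a b)) = (\<Sum>(x,y)\<in>D. if x \<in> A \<and> y \<notin> A then e x y else 0)"
    unfolding D_def e_def sum.cartesian_product using A by (subst filt[OF f, where P="\<lambda>(x,y). x \<in> A \<and> y \<notin> A"]) (auto simp: B_def intro!: sum.cong)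
  have 3: "(\<Sum>(x,y)\<in>QS Alts A. real (Ncnt Rs y x)) = (\<Sum>(x,y)\<in>D. if x \<in> A \<and> x \<noteq> y then n y x else 0)"
    unfolding D_def n_def using A by (subst filt[OF f, where P="\<lambda>(x,y). x \<in> A \<and> x \<noteq> y"]) (auto simp: QS_def intro!: sum.cong)
  have 4: "real (dwo_cost Rs Alts A) = (\<Sum>(x,y)\<in>D. if x \<in> A \<and> y \<notin> A then 2 * n y x + e y x else 0)
     + (\<Sum>(x,y)\<in>D. if x \<noteq> y \<and> ((x \<in> A \<and> y \<in> A) \<or> (x \<notin> A \<and> y \<notin> A)) then n x y else 0)"
  proof -
    have a: "(\<Sum>(a, b) \<in> A \<times> (Alts - A). real (2 * Ncnt Rs b a + Ecnt Rs b a)) = (\<Sum>(x,y)\<in>D. if x \<in> A \<and> y \<notin> A then 2 * n y x + e y x else 0)"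
      unfolding D_def n_def e_def using A by (subst filt[OF f, where P="\<lambda>(x,y). x \<in> A \<and> y \<notin> A"]) (auto intro!: sum.cong)
    have b: "(\<Sum>(a, b) \<in> {(a, b). a \<noteq> b \<and> ((a \<in> A \<and> b \<in> A) \<or> (a \<in> Alts - A \<and> b \<in> Alts - A))}. real (Ncnt Rs a b))
       = (\<Sum>(x,y)\<in>D. if x \<noteq> y \<and> ((x \<in> A \<and> y \<in> A) \<or> (x \<notin> A \<and> y \<notin> A)) then n x y else 0)"
      unfolding D_def n_def using A by (subst filt[OF f, where P="\<lambda>(x,y). x \<noteq> y \<and> ((x \<in> A \<and> y \<in> A) \<or> (x \<notin> A \<and> y \<notin> A))"]) (auto intro!: sum.cong)
    show ?thesis unfolding dwo_cost_def of_nat_add of_nat_sum a[symmetric] b[symmetric]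
      by (simp add: case_prod_unfold)
  qed
  have s1: "(\<Sum>(x,y)\<in>D. if x \<notin> A \<and> x \<noteq> y then n x y else 0) = (\<Sum>(x,y)\<in>D. if y \<notin> A \<and> y \<noteq> x then n y x else 0)"
    unfolding D_def by (rule swap_sum)
  have s2: "(\<Sum>(x,y)\<in>D. if x \<noteq> y \<and> ((x \<in> A \<and> y \<in> A) \<or> (x \<notin> A \<and> y \<notin> A)) then n x y else 0)
    = (\<Sum>(x,y)\<in>D. if y \<noteq> x \<and> ((y \<in> A \<and> x \<in> A) \<or> (y \<notin> A \<and> x \<notin> A)) then n y x else 0)"
    unfolding D_def by (rule swap_sum)
  have es: "e x y = e y x" for x y unfolding e_def using Ecnt_sym by metis
  show ?thesis unfolding cap 1 2 3 4 s1 s2 sum.distrib[symmetric]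
    by (intro sum.cong) (auto simp: es)
qed


lemma cap_nonneg_le:
  assumes f: "finite Alts" and L: "L \<ge> 0" and Ssub: "S \<subseteq> nodes Alts" and p: "(u,v) \<in> S \<times> (nodes Alts - S)"
  shows "wt Rs Alts L u v \<le> cut_cap Rs Alts L S"
proof -
  have fin: "finite (S \<times> (nodes Alts - S))"
    using nodes_fin[OF f] Ssub by (meson finite_Diff finite_SigmaI finite_subset)
  show ?thesis unfolding cut_cap_def
    using member_le_sum[OF p _ fin, of "\<lambda>(u,v). wt Rs Alts L u v"] wt_nonneg[OF L] by auto
qed

lemma incons:
  assumes f: "finite Alts" and c: "is_cut Alts S" and L: "L \<ge> 0"
    and ab: "a \<in> Alts" "b \<in> Alts" "a \<noteq> b" and d: "(Alt a \<in> S) \<noteq> (PairN a b \<in> S)"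
  shows "L \<le> cut_cap Rs Alts L S"
proof (cases "Alt a \<in> S")
  case True
  then have "(Alt a, PairN a b) \<in> S \<times> (nodes Alts - S)" using d ab unfolding nodes_def by auto
  from cap_nonneg_le[OF f L _ this, of Rs] c[unfolded is_cut_def] show ?thesis using ab by simp
next
  case False
  then have "(PairN a b, Alt a) \<in> S \<times> (nodes Alts - S)" using d ab unfolding nodes_def by auto
  from cap_nonneg_le[OF f L _ this, of Rs] c[unfolded is_cut_def] show ?thesis using ab by simp
qed

lemma cons:
  assumes c: "is_cut Alts S"
    and h: "\<forall>a b. a \<in> Alts \<and> b \<in> Alts \<and> a \<noteq> b \<longrightarrow> (PairN a b \<in> S \<longleftrightarrow> Alt a \<in> S)"
  shows "S = cutOf Alts {a \<in> Alts. Alt a \<in> S}"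
proof
  show "S \<subseteq> cutOf Alts {a \<in> Alts. Alt a \<in> S}"
  proof
    fix u assume u: "u \<in> S"
    then have "u \<in> nodes Alts" "u \<noteq> Snk" using c unfolding is_cut_def by auto
    then show "u \<in> cutOf Alts {a \<in> Alts. Alt a \<in> S}"
      using u h unfolding nodes_def cutOf_def PS_def by auto
  qed
  show "cutOf Alts {a \<in> Alts. Alt a \<in> S} \<subseteq> S"
    using h c unfolding cutOf_def PS_def is_cut_def by auto
qed

lemma cutOf_cut: "A \<subseteq> Alts \<Longrightarrow> is_cut Alts (cutOf Alts A)"
  unfolding is_cut_def cutOf_def PS_def nodes_def by auto

lemma Ncnt_le: "Ncnt Rs a b \<le> length Rs"
proof -
  have "Ncnt Rs a b \<le> card {..<length Rs}" unfolding Ncnt_def by (rule card_mono) auto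
  then show ?thesis by simp
qed

lemma bound: assumes f: "finite Alts" shows "dwo_cost Rs Alts {} \<le> card Alts * card Alts * length Rs"
proof -
  have "dwo_cost Rs Alts {} = (\<Sum>(a, b) \<in> {(a, b). a \<noteq> b \<and> a \<in> Alts \<and> b \<in> Alts}. Ncnt Rs a b)"
    unfolding dwo_cost_def by simp
  also have "\<dots> \<le> (\<Sum>(a, b) \<in> Alts \<times> Alts. Ncnt Rs a b)"
    by (rule sum_mono2) (use f in auto)
  also have "\<dots> \<le> card (Alts \<times> Alts) * length Rs"
    using sum_bounded_above[of "Alts \<times> Alts" "\<lambda>(a,b). Ncnt Rs a b" "length Rs"] by (auto simp: Ncnt_le)
  finally show ?thesis by (simp add: card_cartesian_product)
qed

lemma natb: "(m::nat) * m * n \<le> (m * n) ^ 5"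
proof (cases "m * n = 0")
  case True then show ?thesis by auto
next
  case False
  then have "m * m * n \<le> m * m * n * n" by simp
  also have "\<dots> = (m*n)^2" by (simp add: power2_eq_square)
  also have "\<dots> \<le> (m*n)^5" using False by (intro power_increasing) auto
  finally show ?thesis .
qed

theorem mainTheorem2:
  fixes Alts :: "'a set" and Rs :: "('a \<times> 'a) set list" and L :: real
  assumes "finite Alts"
    and "\<forall>i < length Rs. Rs ! i \<subseteq> Alts \<times> Alts \<and> refl_on Alts (Rs ! i)"
    and "L > (real (card Alts * length Rs)) ^ 5"
  shows "(\<forall>S. is_min_cut Rs Alts L S \<longrightarrow>
            dwo_cost Rs Alts {a \<in> Alts. Alt a \<in> S} = MP_2WO Rs Alts)
       \<and> (\<forall>A'. A' \<subseteq> Alts \<and> dwo_cost Rs Alts A' = MP_2WO Rs Alts \<longrightarrow>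
            is_min_cut Rs Alts L
              ({Src} \<union> Alt ` A' \<union> {PairN x y | x y. x \<in> A' \<and> y \<in> Alts \<and> x \<noteq> y}))"
proof -
  note f = assms(1)
  have L0: "L \<ge> 0" proof -
    have "0 \<le> (real (card Alts * length Rs))^5" by simp
    then show ?thesis using assms(3) by linarith
  qed
  have d0L: "real (dwo_cost Rs Alts {}) < L"
  proof -
    have "real (dwo_cost Rs Alts {}) \<le> real ((card Alts * length Rs)^5)"
      using bound[OF f, of Rs] natb[of "card Alts" "length Rs"] by linarith
    then show ?thesis using assms(3) by simp
  qed
  have finI: "finite (dwo_cost Rs Alts ` Pow Alts)" using f by simp
  have MPle: "MP_2WO Rs Alts \<le> dwo_cost Rs Alts X" if "X \<subseteq> Alts" for X
    unfolding MP_2WO_def using that finI by (intro Min_le) auto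
  have MPin: "MP_2WO Rs Alts \<in> dwo_cost Rs Alts ` Pow Alts"
    unfolding MP_2WO_def using finI by (intro Min_in) auto
  have capc: "cut_cap Rs Alts L (cutOf Alts X) = real (dwo_cost Rs Alts X)" if "X \<subseteq> Alts" for X
    using cap_cutOf[OF f that] .
  have key: "\<exists>X. X \<subseteq> Alts \<and> S = cutOf Alts X" if c: "is_cut Alts S" and lt: "cut_cap Rs Alts L S < L" for S
  proof -
    have "\<forall>a b. a \<in> Alts \<and> b \<in> Alts \<and> a \<noteq> b \<longrightarrow> (PairN a b \<in> S \<longleftrightarrow> Alt a \<in> S)"
    proof (intro allI impI)
      fix a b assume ab: "a \<in> Alts \<and> b \<in> Alts \<and> a \<noteq> b"
      show "(PairN a b \<in> S \<longleftrightarrow> Alt a \<in> S)"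
      proof (rule ccontr)
        assume "\<not> (PairN a b \<in> S \<longleftrightarrow> Alt a \<in> S)"
        then have "(Alt a \<in> S) \<noteq> (PairN a b \<in> S)" by blast
        from incons[OF f c L0 _ _ _ this, of Rs] ab lt show False by simp
      qed
    qed
    then have e: "S = cutOf Alts {a \<in> Alts. Alt a \<in> S}" by (rule cons[OF c])
    have "{a \<in> Alts. Alt a \<in> S} \<subseteq> Alts" by (rule Collect_restrict)
    from this e show ?thesis by (intro exI[of _ "{a \<in> Alts. Alt a \<in> S}"] conjI)
  qed
  have P1: "dwo_cost Rs Alts {a \<in> Alts. Alt a \<in> S} = MP_2WO Rs Alts" if m: "is_min_cut Rs Alts L S" for S
  proof -
    have c: "is_cut Alts S" using m unfolding is_min_cut_def by blast
    have "cut_cap Rs Alts L S \<le> cut_cap Rs Alts L (cutOf Alts {})"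
      using m cutOf_cut[of "{}" Alts] unfolding is_min_cut_def by blast
    then have "cut_cap Rs Alts L S < L" using capc[of "{}"] d0L by simp
    then obtain X where X: "X \<subseteq> Alts" "S = cutOf Alts X" using key[OF c] by blast
    have XA: "{a \<in> Alts. Alt a \<in> S} = X" using X unfolding cutOf_def PS_def by auto
    have "dwo_cost Rs Alts X \<le> dwo_cost Rs Alts Y" if Y: "Y \<subseteq> Alts" for Y
    proof -
      have "cut_cap Rs Alts L S \<le> cut_cap Rs Alts L (cutOf Alts Y)"
        using m cutOf_cut[OF Y] unfolding is_min_cut_def by blast
      then show ?thesis using capc[OF Y] capc[OF X(1)] X(2) by simp
    qed
    then have "dwo_cost Rs Alts X \<le> MP_2WO Rs Alts" using MPin by auto
    then show ?thesis using MPle[OF X(1)] XA by simp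
  qed
  have P2: "is_min_cut Rs Alts L (cutOf Alts A')" if A': "A' \<subseteq> Alts" "dwo_cost Rs Alts A' = MP_2WO Rs Alts" for A'
    unfolding is_min_cut_def
  proof (intro conjI allI impI)
    show "is_cut Alts (cutOf Alts A')" using cutOf_cut[OF A'(1)] .
    fix S' assume c: "is_cut Alts S'"
    show "cut_cap Rs Alts L (cutOf Alts A') \<le> cut_cap Rs Alts L S'"
    proof (cases "cut_cap Rs Alts L S' < L")
      case True
      then obtain X where X: "X \<subseteq> Alts" "S' = cutOf Alts X" using key[OF c] by blast
      show ?thesis using capc[OF X(1)] capc[OF A'(1)] X(2) MPle[OF X(1)] A'(2) by simp
    next
      case False
      have "dwo_cost Rs Alts A' \<le> dwo_cost Rs Alts {}" using MPle[of "{}"] A'(2) by simp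
      then show ?thesis using capc[OF A'(1)] d0L False by linarith
    qed
  qed
  show ?thesis
  proof (intro conjI allI impI)
    fix S assume "is_min_cut Rs Alts L S"
    then show "dwo_cost Rs Alts {a \<in> Alts. Alt a \<in> S} = MP_2WO Rs Alts" by (rule P1)
  next
    fix A' assume h: "A' \<subseteq> Alts \<and> dwo_cost Rs Alts A' = MP_2WO Rs Alts"
    have e: "cutOf Alts A' = {Src} \<union> Alt ` A' \<union> {PairN x y | x y. x \<in> A' \<and> y \<in> Alts \<and> x \<noteq> y}"
      by (simp add: cutOf_def PS_def)
    have "is_min_cut Rs Alts L (cutOf Alts A')" using h by (intro P2) auto
    then show "is_min_cut Rs Alts L ({Src} \<union> Alt ` A' \<union> {PairN x y | x y. x \<in> A' \<and> y \<in> Alts \<and> x \<noteq> y})"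
      by (simp only: e)
  qed
qed

end
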